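(* Let $n\ge1$, $\preceq$ an admissible order on $L([0,1])$, $F\colon L([0,1])^2\to L([0,1])$, $G\colon L([0,1])^n\to L([0,1])$. The IV Sugeno-like $FG$-functional $\mathbf S_m^{F,G}$ satisfies: (i) $\mathbf S_m^{F,G}\succeq\wedge$ for every IV fuzzy measure $m$ whenever (a) $F(X,\mathbf1)\succeq X$ for all $X$ and $G=f\circ\mathrm{Proj}_1$ for some $f\colon L([0,1])\to L([0,1])$ with $f\succeq \mathrm{Id}$; or (b) $F(X,\mathbf1)\succeq X$ for all $X$, $F$ is non-decreasing in the second variable and $G=f\circ\vee$ for some $f$ with $f\succeq\mathrm{Id}$; (ii) $\mathbf S_m^{F,G}\preceq\vee$ for every $m$ whenever (a) $F(X,\mathbf1)\preceq X$ for all $X$ and $G=f\circ\mathrm{Proj}_1$ with $f\preceq\mathrm{Id}$; or (b) $F(X,\mathbf1)\preceq X$ for all $X$, $F$ is non-decreasing in the second variable and $G=f\circ\vee$ with $f\preceq\mathrm{Id}$; (iii) $\mathbf S_m^{F,G}$ is internal for every $m$ whenever (a) $F(X,\mathbf1)=X$ for all $X$ and $G=\mathrm{Proj}_1$; or (b) $F(X,\mathbf1)=X$ for all $X$, $F$ is non-decreasing in the second variable and $G=\vee$.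
   Context: $N=\{1,\dots,n\}$. $L([0,1])=\{[a,b]:0\le a\le b\le1\}$, $\mathbf0=[0,0]$, $\mathbf1=[1,1]$. An admissible order $\preceq$ is a total order on $L([0,1])$ with $[a,b]\preceq[c,d]$ whenever $a\le c$, $b\le d$. $\vee,\wedge$ denote maximum and minimum w.r.t. $\preceq$; monotonicity is w.r.t. $\preceq$; $\mathrm{Proj}_1(X_1,\dots,X_n)=X_1$; $f\succeq\mathrm{Id}$ means $f(X)\succeq X$ for all $X$ (similarly $\preceq$). $\mathbf S\succeq\wedge$ means $\mathbf S(X_1,\dots,X_n)\succeq\wedge(X_1,\dots,X_n)$ for all inputs, similarly $\mathbf S\preceq\vee$; internal means both. An IV fuzzy measure w.r.t. $\preceq$ is $m\colon2^N\to L([0,1])$, $m(\emptyset)=\mathbf0$, $m(N)=\mathbf1$, $m(A)\preceq m(B)$ for $A\subseteq B$. For a permutation $\sigma$, $E_{\sigma(i)}=\{\sigma(i),\dots,\sigma(n)\}$. $\mathbf S_m^{F,G}(X_1,\dots,X_n)=G\big(F(X_{\sigma(1)},m(E_{\sigma(1)})),\dots,F(X_{\sigma(n)},m(E_{\sigma(n)}))\big)$ with $\sigma$ any permutation such that $X_{\sigma(1)}\preceq\dots\preceq X_{\sigma(n)}$; it is defined when this value does not depend on the choice of $\sigma$ for all inputs. *)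

theory Defs
  imports Main "HOL.Real"
begin

typedef ivl = "{p :: real \<times> real. 0 \<le> fst p \<and> fst p \<le> snd p \<and> snd p \<le> 1}"
  morphisms ivl_rep Abs_ivl
  by (rule exI[of _ "(0,0)"]) auto

definition lo :: "ivl \<Rightarrow> real" where "lo X = fst (ivl_rep X)"
definition hi :: "ivl \<Rightarrow> real" where "hi X = snd (ivl_rep X)"

definition iv0 :: ivl where "iv0 = Abs_ivl (0, 0)"
definition iv1 :: ivl where "iv1 = Abs_ivl (1, 1)"

definition admissible_order :: "(ivl \<Rightarrow> ivl \<Rightarrow> bool) \<Rightarrow> bool" where
  "admissible_order le \<longleftrightarrow>
     (\<forall>x. le x x) \<and>
     (\<forall>x y. le x y \<and> le y x \<longrightarrow> x = y) \<and>
     (\<forall>x y z. le x y \<and> le y z \<longrightarrow> le x z) \<and>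
     (\<forall>x y. le x y \<or> le y x) \<and>
     (\<forall>x y. lo x \<le> lo y \<and> hi x \<le> hi y \<longrightarrow> le x y)"

definition iv_max :: "(ivl \<Rightarrow> ivl \<Rightarrow> bool) \<Rightarrow> ivl \<Rightarrow> ivl \<Rightarrow> ivl" where
  "iv_max le x y = (if le x y then y else x)"
definition iv_min :: "(ivl \<Rightarrow> ivl \<Rightarrow> bool) \<Rightarrow> ivl \<Rightarrow> ivl \<Rightarrow> ivl" where
  "iv_min le x y = (if le x y then x else y)"

definition iv_Max :: "(ivl \<Rightarrow> ivl \<Rightarrow> bool) \<Rightarrow> ivl list \<Rightarrow> ivl" where
  "iv_Max le xs = fold (iv_max le) (tl xs) (hd xs)"
definition iv_Min :: "(ivl \<Rightarrow> ivl \<Rightarrow> bool) \<Rightarrow> ivl list \<Rightarrow> ivl" where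
  "iv_Min le xs = fold (iv_min le) (tl xs) (hd xs)"

definition tuple :: "nat \<Rightarrow> (nat \<Rightarrow> ivl) \<Rightarrow> ivl list" where
  "tuple n X = map X [1..<n+1]"

definition iv_fuzzy_measure :: "(ivl \<Rightarrow> ivl \<Rightarrow> bool) \<Rightarrow> nat \<Rightarrow> (nat set \<Rightarrow> ivl) \<Rightarrow> bool" where
  "iv_fuzzy_measure le n m \<longleftrightarrow>
     m {} = iv0 \<and> m {1..n} = iv1 \<and>
     (\<forall>A B. A \<subseteq> B \<and> B \<subseteq> {1..n} \<longrightarrow> le (m A) (m B))"

definition sorting_perm :: "(ivl \<Rightarrow> ivl \<Rightarrow> bool) \<Rightarrow> nat \<Rightarrow> (nat \<Rightarrow> ivl) \<Rightarrow> (nat \<Rightarrow> nat) \<Rightarrow> bool" where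
  "sorting_perm le n X \<sigma> \<longleftrightarrow>
     bij_betw \<sigma> {1..n} {1..n} \<and>
     (\<forall>i j. 1 \<le> i \<and> i \<le> j \<and> j \<le> n \<longrightarrow> le (X (\<sigma> i)) (X (\<sigma> j)))"

text \<open>Value of the Sugeno-like FG-functional for a given permutation; E_{sigma(i)} = sigma ` {i..n}.\<close>
definition sugeno_val ::
  "(ivl \<Rightarrow> ivl \<Rightarrow> ivl) \<Rightarrow> (ivl list \<Rightarrow> ivl) \<Rightarrow> (nat set \<Rightarrow> ivl) \<Rightarrow> nat \<Rightarrow> (nat \<Rightarrow> ivl) \<Rightarrow> (nat \<Rightarrow> nat) \<Rightarrow> ivl" where
  "sugeno_val F G m n X \<sigma> = G (map (\<lambda>i. F (X (\<sigma> i)) (m (\<sigma> ` {i..n}))) [1..<n+1])"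

definition sugeno_defined ::
  "(ivl \<Rightarrow> ivl \<Rightarrow> bool) \<Rightarrow> (ivl \<Rightarrow> ivl \<Rightarrow> ivl) \<Rightarrow> (ivl list \<Rightarrow> ivl) \<Rightarrow> (nat set \<Rightarrow> ivl) \<Rightarrow> nat \<Rightarrow> bool" where
  "sugeno_defined le F G m n \<longleftrightarrow>
     (\<forall>X \<sigma> \<tau>. sorting_perm le n X \<sigma> \<and> sorting_perm le n X \<tau> \<longrightarrow>
        sugeno_val F G m n X \<sigma> = sugeno_val F G m n X \<tau>)"

definition sugeno ::
  "(ivl \<Rightarrow> ivl \<Rightarrow> bool) \<Rightarrow> (ivl \<Rightarrow> ivl \<Rightarrow> ivl) \<Rightarrow> (ivl list \<Rightarrow> ivl) \<Rightarrow> (nat set \<Rightarrow> ivl) \<Rightarrow> nat \<Rightarrow> (nat \<Rightarrow> ivl) \<Rightarrow> ivl" where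
  "sugeno le F G m n X = sugeno_val F G m n X (SOME \<sigma>. sorting_perm le n X \<sigma>)"

end

theory Submission
  imports Defs
begin

lemma adm_props:
  assumes "admissible_order le"
  shows "le x x" "le x y \<Longrightarrow> le y x \<Longrightarrow> x = y" "le x y \<Longrightarrow> le y z \<Longrightarrow> le x z"
    "le x y \<or> le y x"
  using assms unfolding admissible_order_def by blast+

lemma fold_max:
  assumes "admissible_order le"
  shows "le a (fold (iv_max le) xs a) \<and> (\<forall>x\<in>set xs. le x (fold (iv_max le) xs a))
         \<and> fold (iv_max le) xs a \<in> insert a (set xs)"
proof (induction xs arbitrary: a)
  case Nil then show ?case using adm_props[OF assms] by simp
next
  case (Cons y ys)
  have 1: "le a (iv_max le y a)" "le y (iv_max le y a)" "iv_max le y a \<in> {a, y}"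
  proof -
    show "le a (iv_max le y a)" unfolding iv_max_def
      using adm_props(1)[OF assms] adm_props(4)[OF assms, of y a] by (cases "le y a") auto
    show "le y (iv_max le y a)" unfolding iv_max_def
      using adm_props(1)[OF assms] adm_props(4)[OF assms, of y a] by (cases "le y a") auto
    show "iv_max le y a \<in> {a, y}" unfolding iv_max_def by simp
  qed
  have IH: "le (iv_max le y a) (fold (iv_max le) ys (iv_max le y a)) \<and> (\<forall>x\<in>set ys. le x (fold (iv_max le) ys (iv_max le y a)))
         \<and> fold (iv_max le) ys (iv_max le y a) \<in> insert (iv_max le y a) (set ys)" by (rule Cons)
  have t1: "le a (fold (iv_max le) ys (iv_max le y a))" using adm_props(3)[OF assms 1(1)] IH by blast
  have t2: "le y (fold (iv_max le) ys (iv_max le y a))" using adm_props(3)[OF assms 1(2)] IH by blast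
  show ?case using IH t1 t2 1(3) by auto
qed

lemma fold_min:
  assumes "admissible_order le"
  shows "le (fold (iv_min le) xs a) a \<and> (\<forall>x\<in>set xs. le (fold (iv_min le) xs a) x)"
proof (induction xs arbitrary: a)
  case Nil then show ?case using adm_props[OF assms] by simp
next
  case (Cons y ys)
  have 1: "le (iv_min le y a) a" "le (iv_min le y a) y"
  proof -
    show "le (iv_min le y a) a" unfolding iv_min_def
      using adm_props(1)[OF assms] adm_props(4)[OF assms, of y a] by (cases "le y a") auto
    show "le (iv_min le y a) y" unfolding iv_min_def
      using adm_props(1)[OF assms] adm_props(4)[OF assms, of y a] by (cases "le y a") auto
  qed
  have IH: "le (fold (iv_min le) ys (iv_min le y a)) (iv_min le y a) \<and> (\<forall>x\<in>set ys. le (fold (iv_min le) ys (iv_min le y a)) x)" by (rule Cons)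
  have t1: "le (fold (iv_min le) ys (iv_min le y a)) a" using adm_props(3)[OF assms _ 1(1)] IH by blast
  have t2: "le (fold (iv_min le) ys (iv_min le y a)) y" using adm_props(3)[OF assms _ 1(2)] IH by blast
  show ?case using IH t1 t2 by auto
qed

lemma Max_ge:
  assumes "admissible_order le" "x \<in> set xs"
  shows "le x (iv_Max le xs)"
  using assms fold_max[OF assms(1), where xs="tl xs" and a="hd xs"] unfolding iv_Max_def
  by (cases xs) auto

lemma Max_in:
  assumes "admissible_order le" "xs \<noteq> []"
  shows "iv_Max le xs \<in> set xs"
  using assms fold_max[OF assms(1), where xs="tl xs" and a="hd xs"] unfolding iv_Max_def
  by (cases xs) auto

lemma Min_le:
  assumes "admissible_order le" "x \<in> set xs"
  shows "le (iv_Min le xs) x"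
  using assms fold_min[OF assms(1), where xs="tl xs" and a="hd xs"] unfolding iv_Min_def
  by (cases xs) auto

lemma sorting_exists:
  assumes adm: "admissible_order le"
  shows "\<exists>\<sigma>. sorting_perm le n X \<sigma>"
proof -
  define rk where "rk a = card {k\<in>{1..n}. le (X k) (X a) \<and> X k \<noteq> X a}" for a
  have strict: "rk b < rk a" if "b \<in> {1..n}" "le (X b) (X a)" "X b \<noteq> X a" for a b
  proof -
    have "{k\<in>{1..n}. le (X k) (X b) \<and> X k \<noteq> X b} \<subset> {k\<in>{1..n}. le (X k) (X a) \<and> X k \<noteq> X a}"
    proof (rule psubsetI)
      show "{k\<in>{1..n}. le (X k) (X b) \<and> X k \<noteq> X b} \<subseteq> {k\<in>{1..n}. le (X k) (X a) \<and> X k \<noteq> X a}"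
      proof
        fix k assume k: "k \<in> {k\<in>{1..n}. le (X k) (X b) \<and> X k \<noteq> X b}"
        have ka: "le (X k) (X a)" using adm_props(3)[OF adm, of "X k" "X b" "X a"] k that(2) by blast
        have "X k \<noteq> X a"
        proof
          assume "X k = X a"
          then have "le (X b) (X k)" using that(2) by simp
          then show False using adm_props(2)[OF adm, of "X k" "X b"] k by blast
        qed
        then show "k \<in> {k\<in>{1..n}. le (X k) (X a) \<and> X k \<noteq> X a}" using k ka by blast
      qed
      have "b \<in> {k\<in>{1..n}. le (X k) (X a) \<and> X k \<noteq> X a}" using that by blast
      moreover have "b \<notin> {k\<in>{1..n}. le (X k) (X b) \<and> X k \<noteq> X b}" by blast
      ultimately show "{k\<in>{1..n}. le (X k) (X b) \<and> X k \<noteq> X b} \<noteq> {k\<in>{1..n}. le (X k) (X a) \<and> X k \<noteq> X a}" by blast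
    qed
    then show ?thesis unfolding rk_def by (intro psubset_card_mono) simp_all
  qed
  define L where "L = sort_key rk [1..<n+1]"
  define \<sigma> where "\<sigma> i = L ! (i - 1)" for i
  have lenL: "length L = n" unfolding L_def by simp
  have setL: "set L = {1..n}" unfolding L_def by auto
  have distL: "distinct L" unfolding L_def by simp
  have sortL: "sorted (map rk L)" unfolding L_def by simp
  have "bij_betw \<sigma> {1..n} {1..n}"
  proof (rule bij_betw_imageI)
    show "inj_on \<sigma> {1..n}" unfolding inj_on_def \<sigma>_def
      using distL lenL by (auto simp: nth_eq_iff_index_eq)
    show "\<sigma> ` {1..n} = {1..n}"
    proof
      show "\<sigma> ` {1..n} \<subseteq> {1..n}"
      proof
        fix y assume "y \<in> \<sigma> ` {1..n}"
        then obtain i where i: "i \<in> {1..n}" "y = L ! (i - 1)" unfolding \<sigma>_def by auto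
        then have "i - 1 < length L" using lenL by auto
        then show "y \<in> {1..n}" using i setL nth_mem by metis
      qed
      show "{1..n} \<subseteq> \<sigma> ` {1..n}"
      proof
        fix x assume "x \<in> {1..n}"
        then obtain i where "i < n" "L ! i = x" using setL lenL by (metis in_set_conv_nth)
        then show "x \<in> \<sigma> ` {1..n}" unfolding \<sigma>_def by (intro image_eqI[of _ _ "i+1"]) auto
      qed
    qed
  qed
  moreover have "le (X (\<sigma> i)) (X (\<sigma> j))" if "1 \<le> i" "i \<le> j" "j \<le> n" for i j
  proof (rule ccontr)
    assume nle: "\<not> le (X (\<sigma> i)) (X (\<sigma> j))"
    have "j - 1 < length L" using that lenL by auto
    then have mem: "\<sigma> j \<in> {1..n}" unfolding \<sigma>_def using setL nth_mem by metis
    have "rk (\<sigma> i) \<le> rk (\<sigma> j)" unfolding \<sigma>_def using sortL that lenL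
      using sorted_nth_mono[OF sortL, of "i-1" "j-1"] by auto
    have "le (X (\<sigma> j)) (X (\<sigma> i))" using nle adm_props(4)[OF adm, of "X (\<sigma> i)" "X (\<sigma> j)"] by blast
    moreover have "X (\<sigma> j) \<noteq> X (\<sigma> i)" using nle adm_props(1)[OF adm, of "X (\<sigma> i)"] by auto
    ultimately have "rk (\<sigma> j) < rk (\<sigma> i)" using strict[OF mem] by blast
    moreover have "rk (\<sigma> i) \<le> rk (\<sigma> j)" by fact
    ultimately show False by simp
  qed
  ultimately show ?thesis unfolding sorting_perm_def by blast
qed

lemma core:
  assumes adm: "admissible_order le" and n: "n \<ge> 1" and fm: "iv_fuzzy_measure le n m"
  obtains ys \<sigma> where "sugeno le F G m n X = G ys" "length ys = n" "hd ys = F (X (\<sigma> 1)) iv1"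
    "X (\<sigma> 1) \<in> set (tuple n X)"
    "\<forall>y\<in>set ys. \<exists>i\<in>{1..n}. y = F (X (\<sigma> i)) (m (\<sigma> ` {i..n})) \<and> X (\<sigma> i) \<in> set (tuple n X)
        \<and> le (m (\<sigma> ` {i..n})) iv1"
proof -
  define \<sigma> where "\<sigma> = (SOME \<sigma>. sorting_perm le n X \<sigma>)"
  have sp: "sorting_perm le n X \<sigma>" unfolding \<sigma>_def using sorting_exists[OF adm] by (rule someI_ex)
  then have bij: "bij_betw \<sigma> {1..n} {1..n}" unfolding sorting_perm_def by blast
  then have img: "\<sigma> ` {1..n} = {1..n}" by (simp add: bij_betw_def)
  define ys where "ys = map (\<lambda>i. F (X (\<sigma> i)) (m (\<sigma> ` {i..n}))) [1..<n+1]"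
  have 1: "sugeno le F G m n X = G ys" unfolding sugeno_def sugeno_val_def ys_def \<sigma>_def by simp
  have 2: "length ys = n" unfolding ys_def by simp
  have m1: "m {1..n} = iv1" using fm unfolding iv_fuzzy_measure_def by blast
  have hd1: "hd [1..<n+1] = 1" using n by (metis One_nat_def Suc_le_eq hd_upt less_add_same_cancel2 zero_less_one_class.zero_less_one)
  have ne: "[1..<n+1] \<noteq> []" using n by simp
  have "hd ys = F (X (\<sigma> (hd [1..<n+1]))) (m (\<sigma> ` {hd [1..<n+1]..n}))"
    unfolding ys_def by (rule hd_map[OF ne])
  then have 3: "hd ys = F (X (\<sigma> 1)) iv1" using hd1 img m1 by simp
  have intup: "X (\<sigma> i) \<in> set (tuple n X)" if "i \<in> {1..n}" for i
  proof -
    have "\<sigma> i \<in> {1..n}" using img that by blast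
    then show ?thesis unfolding tuple_def set_map set_upt by (intro imageI) simp
  qed
  have 4: "X (\<sigma> 1) \<in> set (tuple n X)" using intup n by auto
  have 5: "\<forall>y\<in>set ys. \<exists>i\<in>{1..n}. y = F (X (\<sigma> i)) (m (\<sigma> ` {i..n})) \<and> X (\<sigma> i) \<in> set (tuple n X)
        \<and> le (m (\<sigma> ` {i..n})) iv1"
  proof
    fix y assume "y \<in> set ys"
    then obtain i where i: "i \<in> {1..n}" "y = F (X (\<sigma> i)) (m (\<sigma> ` {i..n}))" unfolding ys_def set_map set_upt by (auto simp: less_Suc_eq_le)
    have "{i..n} \<subseteq> {1..n}" using i by auto
    then have sub: "\<sigma> ` {i..n} \<subseteq> {1..n}" using img image_mono by metis
    have mono: "\<forall>A B. A \<subseteq> B \<and> B \<subseteq> {1..n} \<longrightarrow> le (m A) (m B)"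
      using fm unfolding iv_fuzzy_measure_def by blast
    have "le (m (\<sigma> ` {i..n})) (m {1..n})" using mono sub by blast
    then have "le (m (\<sigma> ` {i..n})) iv1" using m1 by simp
    then show "\<exists>i\<in>{1..n}. y = F (X (\<sigma> i)) (m (\<sigma> ` {i..n})) \<and> X (\<sigma> i) \<in> set (tuple n X)
        \<and> le (m (\<sigma> ` {i..n})) iv1" using i intup by blast
  qed
  show ?thesis using that[OF 1 2 3 4 5] .
qed

lemma lower:
  assumes adm: "admissible_order le" and n: "n \<ge> 1" and fm: "iv_fuzzy_measure le n m"
    and F1: "\<forall>X. le X (F X iv1)" and f: "\<forall>X. le X (f X)"
    and G: "(\<forall>xs. length xs = n \<longrightarrow> G xs = f (hd xs)) \<or> (\<forall>xs. length xs = n \<longrightarrow> G xs = f (iv_Max le xs))"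
  shows "le (iv_Min le (tuple n X)) (sugeno le F G m n X)"
proof -
  obtain ys \<sigma> where c: "sugeno le F G m n X = G ys" "length ys = n" "hd ys = F (X (\<sigma> 1)) iv1"
    "X (\<sigma> 1) \<in> set (tuple n X)"
    "\<forall>y\<in>set ys. \<exists>i\<in>{1..n}. y = F (X (\<sigma> i)) (m (\<sigma> ` {i..n})) \<and> X (\<sigma> i) \<in> set (tuple n X)
        \<and> le (m (\<sigma> ` {i..n})) iv1"
    by (rule core[OF adm n fm])
  have ne: "ys \<noteq> []" using c(2) n by auto
  have a0: "le (iv_Min le (tuple n X)) (X (\<sigma> 1))" using Min_le[OF adm c(4)] .
  have a1: "le (X (\<sigma> 1)) (hd ys)" using F1 c(3) by simp
  have a: "le (iv_Min le (tuple n X)) (hd ys)" using adm_props(3)[OF adm a0 a1] .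
  have b: "le (hd ys) (G ys)"
  proof (cases "\<forall>xs. length xs = n \<longrightarrow> G xs = f (hd xs)")
    case True then show ?thesis using c(2) f by simp
  next
    case False
    then have "G ys = f (iv_Max le ys)" using G c(2) by blast
    moreover have "le (hd ys) (iv_Max le ys)" using Max_ge[OF adm] ne by simp
    ultimately show ?thesis using f adm_props(3)[OF adm] by simp
  qed
  show ?thesis unfolding c(1) using adm_props(3)[OF adm a b] .
qed

lemma upper:
  assumes adm: "admissible_order le" and n: "n \<ge> 1" and fm: "iv_fuzzy_measure le n m"
    and F1: "\<forall>X. le (F X iv1) X" and f: "\<forall>X. le (f X) X"
    and G: "(\<forall>xs. length xs = n \<longrightarrow> G xs = f (hd xs)) \<or>
       ((\<forall>X Y Z. le Y Z \<longrightarrow> le (F X Y) (F X Z)) \<and> (\<forall>xs. length xs = n \<longrightarrow> G xs = f (iv_Max le xs)))"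
  shows "le (sugeno le F G m n X) (iv_Max le (tuple n X))"
proof -
  obtain ys \<sigma> where c: "sugeno le F G m n X = G ys" "length ys = n" "hd ys = F (X (\<sigma> 1)) iv1"
    "X (\<sigma> 1) \<in> set (tuple n X)"
    "\<forall>y\<in>set ys. \<exists>i\<in>{1..n}. y = F (X (\<sigma> i)) (m (\<sigma> ` {i..n})) \<and> X (\<sigma> i) \<in> set (tuple n X)
        \<and> le (m (\<sigma> ` {i..n})) iv1"
    by (rule core[OF adm n fm])
  have ne: "ys \<noteq> []" using c(2) n by auto
  note tr = adm_props(3)[OF adm]
  show ?thesis
  proof (cases "\<forall>xs. length xs = n \<longrightarrow> G xs = f (hd xs)")
    case True
    then have "G ys = f (hd ys)" using c(2) by simp
    have u1: "le (G ys) (hd ys)" using \<open>G ys = f (hd ys)\<close> f by simp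
    have u2: "le (hd ys) (X (\<sigma> 1))" using c(3) F1 by simp
    show ?thesis unfolding c(1) using tr[OF u1 tr[OF u2 Max_ge[OF adm c(4)]]] .
  next
    case False
    then have mono: "\<forall>X Y Z. le Y Z \<longrightarrow> le (F X Y) (F X Z)"
      and Gy: "G ys = f (iv_Max le ys)" using G c(2) by blast+
    have "iv_Max le ys \<in> set ys" using Max_in[OF adm ne] .
    then obtain i where i: "iv_Max le ys = F (X (\<sigma> i)) (m (\<sigma> ` {i..n}))" "X (\<sigma> i) \<in> set (tuple n X)"
        "le (m (\<sigma> ` {i..n})) iv1" using c(5) by blast
    have "le (iv_Max le ys) (F (X (\<sigma> i)) iv1)" using i(1,3) mono by simp
    then have "le (iv_Max le ys) (X (\<sigma> i))" using F1 tr by blast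
    then have v: "le (iv_Max le ys) (iv_Max le (tuple n X))" using Max_ge[OF adm i(2)] tr by blast
    have "le (G ys) (iv_Max le ys)" using Gy f by simp
    then show ?thesis unfolding c(1) using tr v by blast
  qed
qed

theorem proposition4:
  fixes n :: nat
    and le :: "ivl \<Rightarrow> ivl \<Rightarrow> bool"
    and F :: "ivl \<Rightarrow> ivl \<Rightarrow> ivl"
    and G :: "ivl list \<Rightarrow> ivl"
  assumes "n \<ge> 1"
    and "admissible_order le"
  shows
   "(((\<forall>X. le X (F X iv1)) \<and>
       (\<exists>f. (\<forall>X. le X (f X)) \<and> (\<forall>xs. length xs = n \<longrightarrow> G xs = f (hd xs))))
     \<or> ((\<forall>X. le X (F X iv1)) \<and> (\<forall>X Y Z. le Y Z \<longrightarrow> le (F X Y) (F X Z)) \<and>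
       (\<exists>f. (\<forall>X. le X (f X)) \<and> (\<forall>xs. length xs = n \<longrightarrow> G xs = f (iv_Max le xs))))
     \<longrightarrow> (\<forall>m. iv_fuzzy_measure le n m \<and> sugeno_defined le F G m n \<longrightarrow>
           (\<forall>X. le (iv_Min le (tuple n X)) (sugeno le F G m n X))))
  \<and>
   (((\<forall>X. le (F X iv1) X) \<and>
       (\<exists>f. (\<forall>X. le (f X) X) \<and> (\<forall>xs. length xs = n \<longrightarrow> G xs = f (hd xs))))
     \<or> ((\<forall>X. le (F X iv1) X) \<and> (\<forall>X Y Z. le Y Z \<longrightarrow> le (F X Y) (F X Z)) \<and>
       (\<exists>f. (\<forall>X. le (f X) X) \<and> (\<forall>xs. length xs = n \<longrightarrow> G xs = f (iv_Max le xs))))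
     \<longrightarrow> (\<forall>m. iv_fuzzy_measure le n m \<and> sugeno_defined le F G m n \<longrightarrow>
           (\<forall>X. le (sugeno le F G m n X) (iv_Max le (tuple n X)))))
  \<and>
   (((\<forall>X. F X iv1 = X) \<and> (\<forall>xs. length xs = n \<longrightarrow> G xs = hd xs))
     \<or> ((\<forall>X. F X iv1 = X) \<and> (\<forall>X Y Z. le Y Z \<longrightarrow> le (F X Y) (F X Z)) \<and>
        (\<forall>xs. length xs = n \<longrightarrow> G xs = iv_Max le xs))
     \<longrightarrow> (\<forall>m. iv_fuzzy_measure le n m \<and> sugeno_defined le F G m n \<longrightarrow>
           (\<forall>X. le (iv_Min le (tuple n X)) (sugeno le F G m n X) \<and>
                le (sugeno le F G m n X) (iv_Max le (tuple n X)))))"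
proof (intro conjI impI allI)
  note n = assms(1) and adm = assms(2)
  note refl = adm_props(1)[OF adm]
  {
    fix m X
    assume h: "((\<forall>X. le X (F X iv1)) \<and>
       (\<exists>f. (\<forall>X. le X (f X)) \<and> (\<forall>xs. length xs = n \<longrightarrow> G xs = f (hd xs))))
     \<or> ((\<forall>X. le X (F X iv1)) \<and> (\<forall>X Y Z. le Y Z \<longrightarrow> le (F X Y) (F X Z)) \<and>
       (\<exists>f. (\<forall>X. le X (f X)) \<and> (\<forall>xs. length xs = n \<longrightarrow> G xs = f (iv_Max le xs))))"
      and fm: "iv_fuzzy_measure le n m \<and> sugeno_defined le F G m n"
    from h obtain f where "\<forall>X. le X (F X iv1)" "\<forall>X. le X (f X)"
      "(\<forall>xs. length xs = n \<longrightarrow> G xs = f (hd xs)) \<or> (\<forall>xs. length xs = n \<longrightarrow> G xs = f (iv_Max le xs))"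
      by blast
    then show "le (iv_Min le (tuple n X)) (sugeno le F G m n X)"
      using lower[OF adm n conjunct1[OF fm]] by blast
  }
  {
    fix m X
    assume h: "((\<forall>X. le (F X iv1) X) \<and>
       (\<exists>f. (\<forall>X. le (f X) X) \<and> (\<forall>xs. length xs = n \<longrightarrow> G xs = f (hd xs))))
     \<or> ((\<forall>X. le (F X iv1) X) \<and> (\<forall>X Y Z. le Y Z \<longrightarrow> le (F X Y) (F X Z)) \<and>
       (\<exists>f. (\<forall>X. le (f X) X) \<and> (\<forall>xs. length xs = n \<longrightarrow> G xs = f (iv_Max le xs))))"
      and fm: "iv_fuzzy_measure le n m \<and> sugeno_defined le F G m n"
    from h obtain f where "\<forall>X. le (F X iv1) X" "\<forall>X. le (f X) X"
      "(\<forall>xs. length xs = n \<longrightarrow> G xs = f (hd xs)) \<or>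
       ((\<forall>X Y Z. le Y Z \<longrightarrow> le (F X Y) (F X Z)) \<and> (\<forall>xs. length xs = n \<longrightarrow> G xs = f (iv_Max le xs)))"
      by blast
    then show "le (sugeno le F G m n X) (iv_Max le (tuple n X))"
      using upper[OF adm n conjunct1[OF fm]] by blast
  }
  {
    fix m X
    assume h: "((\<forall>X. F X iv1 = X) \<and> (\<forall>xs. length xs = n \<longrightarrow> G xs = hd xs))
     \<or> ((\<forall>X. F X iv1 = X) \<and> (\<forall>X Y Z. le Y Z \<longrightarrow> le (F X Y) (F X Z)) \<and>
        (\<forall>xs. length xs = n \<longrightarrow> G xs = iv_Max le xs))"
      and fm: "iv_fuzzy_measure le n m \<and> sugeno_defined le F G m n"
    have F1: "\<forall>X. le X (F X iv1)" "\<forall>X. le (F X iv1) X" "\<forall>X. le X (id X)" "\<forall>X. le (id X) X"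
      using h refl by auto
    have G1: "(\<forall>xs. length xs = n \<longrightarrow> G xs = id (hd xs)) \<or>
       ((\<forall>X Y Z. le Y Z \<longrightarrow> le (F X Y) (F X Z)) \<and> (\<forall>xs. length xs = n \<longrightarrow> G xs = id (iv_Max le xs)))"
      using h by auto
    then have G2: "(\<forall>xs. length xs = n \<longrightarrow> G xs = id (hd xs)) \<or>
       (\<forall>xs. length xs = n \<longrightarrow> G xs = id (iv_Max le xs))" by blast
    show "le (iv_Min le (tuple n X)) (sugeno le F G m n X)"
      using lower[where f=id and F=F and G=G and le=le, OF adm n conjunct1[OF fm] F1(1) F1(3) G2] by blast
    show "le (sugeno le F G m n X) (iv_Max le (tuple n X))"
      using upper[where f=id and F=F and G=G and le=le, OF adm n conjunct1[OF fm] F1(2) F1(4) G1] by blast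
  }
qed

end
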